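(* Let $\alpha$ be a Heron angle with $0\le\alpha\le\pi$, and let $\lambda$ be a rational number with $0\le\lambda\le1$ such that $\sin\alpha=\lambda^2$. Then $\alpha\in\{0,\pi/2,\pi\}$.
   Context: An angle $\theta$ is called a Heron angle if both $\sin\theta$ and $\cos\theta$ are rational numbers. *)

theory Defs
  imports Complex_Main
begin

definition heron_angle :: "real \<Rightarrow> bool" where
  "heron_angle \<theta> \<longleftrightarrow> sin \<theta> \<in> \<rat> \<and> cos \<theta> \<in> \<rat>"

end

theory Submission
  imports Defs "HOL-Computational_Algebra.Computational_Algebra"
begin


lemma sq_split:
  fixes a b c :: nat
  assumes "coprime a b" "a * b = c^2"
  shows "\<exists>u v. a = u^2 \<and> b = v^2"
proof -
  have "is_nth_power 2 (a*b)" using assms(2) by auto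
  then have "is_nth_power 2 a \<and> is_nth_power 2 b"
    using is_nth_power_mult_coprime_nat_iff[OF assms(1)] by blast
  then show ?thesis by (auto elim!: is_nth_powerE)
qed

lemma odd_sq_mod4: "odd (a::nat) \<Longrightarrow> a^2 mod 4 = 1"
proof -
  assume "odd a" then obtain k where "a = 2*k+1" by (metis oddE)
  then have "a^2 = 4*(k^2+k) + 1" by (simp add: power2_eq_square algebra_simps)
  then show ?thesis by simp
qed

lemma even_sq_mod4: "even (a::nat) \<Longrightarrow> a^2 mod 4 = 0"
proof -
  assume "even a" then obtain k where "a = 2*k" by blast
  then have "a^2 = 4*k^2" by (simp add: power2_eq_square algebra_simps)
  then show ?thesis by simp
qed

lemma not_both_odd:
  fixes a b c :: nat
  assumes "a^2 + b^2 = c^2" "odd a" "odd b"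
  shows False
proof -
  have "(a^2 + b^2) mod 4 = 2" using odd_sq_mod4[OF assms(2)] odd_sq_mod4[OF assms(3)]
    by (simp add: mod_add_eq[symmetric])
  moreover have "c^2 mod 4 = 0 \<or> c^2 mod 4 = 1" using odd_sq_mod4 even_sq_mod4 by blast
  ultimately show False using assms(1) by simp
qed

lemma pyth:
  fixes a b c :: nat
  assumes eq: "a^2 + b^2 = c^2" and cop: "coprime a b" and ev: "even b" and bpos: "b > 0"
  shows "\<exists>s t. a = s^2 - t^2 \<and> b = 2*s*t \<and> c = s^2 + t^2 \<and> coprime s t \<and> t < s \<and> 0 < t"
proof -
  have oa: "odd a" using cop ev by (metis coprime_common_divisor_nat dvd_refl even_Suc odd_one)
  have oc: "odd c" using eq oa ev by (metis even_add even_power zero_less_numeral)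
  have "0 < b^2" using bpos by simp
  then have "a^2 < c^2" using eq by linarith
  then have ac: "a < c" using power_less_imp_less_base by blast
  obtain d where d: "c = a + d" using ac less_imp_add_positive by blast
  have "even d" using d oa oc by simp
  then obtain p where p: "d = 2*p" by blast
  define q where "q = a + p"
  have qa: "a = q - p" and qc: "c = q + p" using p d q_def by auto
  obtain w where w: "b = 2*w" using ev by blast
  have "(2*w)^2 + a^2 = (a + 2*p)^2" using eq w d p by simp
  then have "4*w^2 = 4*(p*q)" unfolding q_def by (simp add: power2_eq_square algebra_simps)
  then have wpq: "p*q = w^2" by simp
  have cpq: "coprime p q"
  proof (rule coprimeI)
    fix g assume gp: "g dvd p" and gq: "g dvd q"
    have ga: "g dvd a" using gp gq qa by (simp add: dvd_diff_nat)
    have "g^2 dvd w^2" using gp gq wpq by (metis mult_dvd_mono power2_eq_square)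
    then have "g dvd w" using pow_divides_pow_iff[of 2] by simp
    then have "g dvd b" using w by simp
    then show "is_unit g" using ga cop by (metis coprime_common_divisor)
  qed
  obtain t s where ts: "p = t^2" "q = s^2" using sq_split[OF cpq wpq] by blast
  have "(s*t)^2 = w^2" using wpq ts by (simp add: power_mult_distrib mult.commute)
  then have "w = s*t" by (metis power2_eq_iff_nonneg zero_le)
  have "coprime s t" using cpq ts by (simp add: coprime_commute)
  moreover have "t < s"
  proof (rule ccontr)
    assume "\<not> t < s" then have "s^2 \<le> t^2" by (simp add: power_mono)
    then have "a = 0" using qa ts by simp
    then show False using oa by simp
  qed
  moreover have "0 < t" using wpq ts bpos w by (cases "t = 0") auto
  ultimately show ?thesis using qa qc ts w \<open>w = s*t\<close> by auto
qed

lemma inner: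
  fixes a b c y :: nat
  assumes eq: "a^2 + b^2 = c^2" and cop: "coprime a b" and ev: "even b" and bpos: "0 < b"
    and yeq: "y^2 = 2*a*b"
  shows "\<exists>M N B. M^4 = N^4 + B^2 \<and> 0 < N \<and> 0 < B \<and> (M^2)^2 < c"
proof -
  obtain m n where mn: "a = m^2 - n^2" "b = 2*m*n" "c = m^2 + n^2" "coprime m n" "n < m" "0 < n"
    using pyth[OF eq cop ev bpos] by blast
  define k where "k = a"
  have "n^2 < m^2" using mn by (simp add: power_strict_mono)
  then have mk: "m^2 = k + n^2" and kpos: "0 < k" using mn k_def by auto
  have "even (y^2)" using yeq by simp
  then have "even y" by simp
  then obtain w where w: "y = 2*w" by blast
  have "4*w^2 = 4*(m*n*k)" using yeq w mn k_def by (simp add: power2_eq_square algebra_simps)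
  then have wk: "(m*n)*k = w^2" by simp
  have cmk: "coprime m k"
  proof (rule coprimeI)
    fix g assume "g dvd m" "g dvd k"
    then have "g dvd m^2" "g dvd k" by (auto simp: power2_eq_square)
    then have "g dvd n^2" using mk by (metis dvd_add_right_iff)
    moreover have "coprime m (n^2)" using mn by simp
    ultimately show "is_unit g" using \<open>g dvd m\<close> by (metis coprime_common_divisor)
  qed
  have cnk: "coprime n k"
  proof (rule coprimeI)
    fix g assume "g dvd n" "g dvd k"
    then have "g dvd n^2" "g dvd k" by (auto simp: power2_eq_square)
    then have "g dvd m^2" using mk by simp
    moreover have "coprime n (m^2)" using mn by (simp add: coprime_commute)
    ultimately show "is_unit g" using \<open>g dvd n\<close> by (metis coprime_common_divisor)
  qed
  have "coprime (m*n) k" using cmk cnk by simp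
  then obtain A B where AB: "m*n = A^2" "k = B^2" using sq_split[OF _ wk] by blast
  then obtain M N where MN: "m = M^2" "n = N^2" using sq_split[OF \<open>coprime m n\<close>] by blast
  have "M^4 = N^4 + B^2" using mk AB MN by (simp add: power_mult[symmetric])
  moreover have "0 < N" using MN mn by (cases "N = 0") auto
  moreover have "0 < B" using AB kpos by (cases "B = 0") auto
  moreover have "(M^2)^2 < c" using MN mn by simp
  ultimately show ?thesis by blast
qed


lemma no_sol:
  fixes x :: nat
  shows "x^4 = y^4 + z^2 \<Longrightarrow> 0 < y \<Longrightarrow> 0 < z \<Longrightarrow> False"
proof (induction x arbitrary: y z rule: less_induct)
  case (less x y z)
  note eq = less.prems(1) and ypos = less.prems(2) and zpos = less.prems(3)
  have xpos: "0 < x" using eq ypos by (cases "x = 0") auto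
  show False
  proof (cases "coprime x y")
    case False
    define g where "g = gcd x y"
    have g1: "g \<noteq> 1" using False g_def by (simp add: coprime_iff_gcd_eq_1)
    have gpos: "0 < g" using g_def ypos by simp
    obtain x' where x': "x = g*x'" using g_def by (metis dvd_def gcd_dvd1)
    obtain y' where y': "y = g*y'" using g_def by (metis dvd_def gcd_dvd2)
    have "(g^2)^2 dvd z^2"
    proof -
      have "g^4 * x'^4 = g^4 * y'^4 + z^2" using eq x' y' by (simp add: power_mult_distrib)
      moreover have "g^4 dvd g^4 * x'^4" "g^4 dvd g^4 * y'^4" by auto
      ultimately have "g^4 dvd z^2" by (metis dvd_add_right_iff)
      then show ?thesis by (simp add: power_mult[symmetric])
    qed
    then have "g^2 dvd z" by (subst (asm) pow_divides_pow_iff) simp_all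
    then obtain z' where z': "z = g^2 * z'" by blast
    have "g^4 * x'^4 = g^4 * (y'^4 + z'^2)" using eq x' y' z'
      by (simp add: power_mult_distrib power_mult[symmetric] algebra_simps)
    then have eq': "x'^4 = y'^4 + z'^2" using gpos by simp
    have "x' < x" using x' g1 gpos xpos by (metis less_one mult_less_cancel2 mult_1 nat_neq_iff nat_0_less_mult_iff)
    moreover have "0 < y'" "0 < z'" using ypos y' zpos z' by auto
    ultimately show False using less.IH eq' by blast
  next
    case True
    have "coprime (y^4) (z^2)"
    proof (rule coprimeI)
      fix g assume g: "g dvd y^4" "g dvd z^2"
      then have "g dvd x^4" using eq by simp
      moreover have "coprime (x^4) (y^4)" using True by simp
      ultimately show "is_unit g" using g by (metis coprime_common_divisor)
    qed
    then have cyz: "coprime (y^2) z" by simp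
    have pe: "(y^2)^2 + z^2 = (x^2)^2" using eq by (simp add: power_mult[symmetric])
    show False
    proof (cases "even y")
      case False
      have "even z" using not_both_odd[OF pe] False by auto
      obtain s t where st: "y^2 = s^2 - t^2" "z = 2*s*t" "x^2 = s^2 + t^2" "coprime s t" "t < s" "0 < t"
        using pyth[OF pe cyz \<open>even z\<close> zpos] by blast
      have "t^2 < s^2" using st by (simp add: power_strict_mono)
      then have s2: "s^2 = y^2 + t^2" using st by simp
      have x2: "x^2 = y^2 + 2*t^2" using st s2 by simp
      have "(s^2)^2 = (t^2)^2 + (x^2)*(y^2)" using s2 x2 by (simp add: power2_eq_square algebra_simps)
      then have eq2: "s^4 = t^4 + (x*y)^2" by (simp add: power_mult[symmetric] power_mult_distrib)
      have "0 < t^2" using st by simp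
      then have "s^2 < x^2" using x2 s2 by linarith
      then have "s < x" using power_less_imp_less_base by blast
      moreover have "0 < x*y" using xpos ypos by simp
      ultimately show False using less.IH eq2 st by blast
    next
      case True
      have cz: "coprime z (y^2)" using cyz by (simp add: coprime_commute)
      have "0 < y^2" using ypos by simp
      have pe2: "z^2 + (y^2)^2 = (x^2)^2" using pe by simp
      obtain s t where st: "z = s^2 - t^2" "y^2 = 2*s*t" "x^2 = s^2 + t^2" "coprime s t" "t < s" "0 < t"
        using pyth[OF pe2 cz _ \<open>0 < y^2\<close>] True by auto
      have sp: "s^2 + t^2 = x^2" using st by simp
      have "\<exists>M N B. M^4 = N^4 + B^2 \<and> 0 < N \<and> 0 < B \<and> (M^2)^2 < x"
      proof (cases "even t")
        case True
        show ?thesis using inner[OF sp \<open>coprime s t\<close> True] st by blast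
      next
        case False
        then have "even s" using not_both_odd[OF sp] by auto
        moreover have "t^2 + s^2 = x^2" using sp by simp
        moreover have "coprime t s" using st by (simp add: coprime_commute)
        moreover have "y^2 = 2*t*s" using st by simp
        ultimately show ?thesis using inner[of t s x y] st by blast
      qed
      then obtain M N B where MNB: "M^4 = N^4 + B^2" "0 < N" "0 < B" "(M^2)^2 < x" by blast
      have "M^2 \<le> (M^2)^2" by (cases "M = 0") (auto simp: power2_eq_square)
      then have "M^2 < x" using MNB(4) by linarith
      moreover have "0 < M" using MNB by (cases "M = 0") auto
      ultimately have "M < x" by (metis le_less_trans less_one not_less power2_eq_square mult_le_mono2 mult_1_right)
      then show False using less.IH MNB by blast
    qed
  qed
qed


theorem lemma1:
  fixes a :: real and l :: rat
  assumes "heron_angle a"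
    and "0 \<le> a" and "a \<le> pi"
    and "0 \<le> l" and "l \<le> 1"
    and "sin a = (of_rat l)^2"
  shows "a \<in> {0, pi/2, pi}"
proof -
  have cQ: "cos a \<in> \<rat>" using assms(1) unfolding heron_angle_def by simp
  note sa = assms(6)
  have sc: "(sin a)^2 + (cos a)^2 = 1" by simp
  consider "l = 0" | "l = 1" | "0 < l" "l < 1" using assms by fastforce
  then show ?thesis
  proof cases
    case 1
    then have "sin a = 0" using sa by simp
    then have "a = 0 \<or> a = pi" using sin_eq_0_pi[of a] assms by force
    then show ?thesis by auto
  next
    case 2
    then have "sin a = 1" using sa by simp
    then have "cos a = 0" using sc by (simp add: power2_eq_square)
    then have "a = pi/2" using cos_inj_pi[of a "pi/2"] assms by simp
    then show ?thesis by auto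
  next
    case 3
    have lr: "of_rat l \<in> (\<rat>::real set)" by simp
    obtain p q where pq: "0 < q" "of_rat l = (of_int p / of_int q :: real)"
      using Rats_cases'[OF lr] by metis
    have "0 < (of_rat l :: real)" using 3 by simp
    then have ppos: "0 < p" using pq by (simp add: zero_less_divide_iff)
    obtain u v where uv: "0 < v" "cos a = of_int u / of_int v" using Rats_cases'[OF cQ] by metis
    have "(of_rat l::real) < 1" using 3 by simp
    then have "(of_rat l::real)^2 < 1" using \<open>0 < (of_rat l :: real)\<close> by (simp add: power_less_one_iff)
    then have "sin a < 1" "0 \<le> sin a" using sa by auto
    then have "(sin a)^2 < 1" by (simp add: abs_square_less_1)
    then have "cos a \<noteq> 0" using sc by (metis add.right_neutral less_irrefl power_zero_numeral)
    then have upos: "u \<noteq> 0" using uv by auto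
    have "(of_int p / of_int q)^4 + (of_int u / of_int v)^2 = (1::real)"
      using sc sa pq uv by (simp add: power_mult[symmetric])
    then have "real_of_int (p^4 * v^2 + u^2 * q^4) = real_of_int (q^4 * v^2)"
      using pq uv by (simp add: field_simps)
    then have ie: "p^4 * v^2 + u^2 * q^4 = q^4 * v^2" by linarith
    define P Q U V where "P = nat p" "Q = nat q" "U = nat \<bar>u\<bar>" "V = nat v"
    have "int ((Q*V)^4) = int ((P*V)^4 + (U*V*Q^2)^2)"
    proof -
      have "int ((Q*V)^4) = (q*v)^4" using P_Q_U_V_def pq uv by simp
      also have "\<dots> = v^2 * (q^4*v^2)" by (simp add: algebra_simps)
      also have "\<dots> = v^2 * (p^4 * v^2 + u^2 * q^4)" using ie by simp
      also have "\<dots> = (p*v)^4 + (\<bar>u\<bar>*v*q^2)^2" by (simp add: algebra_simps power_mult_distrib)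
      also have "\<dots> = int ((P*V)^4 + (U*V*Q^2)^2)" using P_Q_U_V_def pq uv ppos by simp
      finally show ?thesis .
    qed
    then have "(Q*V)^4 = (P*V)^4 + (U*V*Q^2)^2" using of_nat_eq_iff by blast
    moreover have "0 < P*V" "0 < U*V*Q^2" using P_Q_U_V_def pq uv ppos upos by auto
    ultimately show ?thesis using no_sol by blast
  qed
qed
end
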